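(* Let $N\in\mathbb{C}^{m\times n}$ have rank $r$ and singular value decomposition $N=U\begin{pmatrix}\Sigma & 0\\ 0 & 0\end{pmatrix}V^{\ast}$, where $\Sigma\in\mathbb{C}^{r\times r}$ is diagonal with positive diagonal entries and $U\in\mathbb{C}^{m\times m}$, $V\in\mathbb{C}^{n\times n}$ are unitary. Let $X\in\mathbb{C}^{m\times m}$ and $Y\in\mathbb{C}^{n\times n}$ be nonsingular and let $M=XNY$. Assume that $X=U\begin{pmatrix}X_{1} & 0\\ X_{2} & X_{4}\end{pmatrix}U^{\ast}$ for some $X_{1}\in\mathbb{C}^{r\times r}$, $X_{2}\in\mathbb{C}^{(m-r)\times r}$, $X_{4}\in\mathbb{C}^{(m-r)\times(m-r)}$, and that $Y=V\begin{pmatrix}Y_{1} & Y_{3}\\ 0 & Y_{4}\end{pmatrix}V^{\ast}$ for some $Y_{1}\in\mathbb{C}^{r\times r}$, $Y_{3}\in\mathbb{C}^{r\times(n-r)}$, $Y_{4}\in\mathbb{C}^{(n-r)\times(n-r)}$. Then $$M^{\dagger}=(I+L^{\ast})(I+LL^{\ast})^{-1}N^{\dagger}N(Y^{-1}N^{\dagger}X^{-1})NN^{\dagger}(I+R^{\ast}R)^{-1}(I+R^{\ast}),$$ where $R=XE_{N}X^{-1}(E_{N}-I)$ and $L=(F_{N}-I)Y^{-1}F_{N}Y$.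
   Context: For a complex matrix $A$, $A^{\ast}$ is its conjugate transpose and $A^{\dagger}$ its Moore--Penrose inverse. $E_{A}:=I-AA^{\dagger}$ and $F_{A}:=I-A^{\dagger}A$ (the orthogonal projectors onto $\mathcal{N}(A^{\ast})$ and $\mathcal{N}(A)$). $I$ denotes an identity matrix of the appropriate size. *)

theory Defs
  imports "Jordan_Normal_Form.Schur_Decomposition" "Jordan_Normal_Form.DL_Rank"
begin

definition minv :: "complex mat \<Rightarrow> complex mat" where
  "minv A = (THE B. B \<in> carrier_mat (dim_row A) (dim_row A) \<and>
              A * B = 1\<^sub>m (dim_row A) \<and> B * A = 1\<^sub>m (dim_row A))"

definition mp_pinv :: "complex mat \<Rightarrow> complex mat" where
  "mp_pinv A = (THE G. G \<in> carrier_mat (dim_col A) (dim_row A) \<and>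
      A * G * A = A \<and> G * A * G = G \<and>
      mat_adjoint (A * G) = A * G \<and> mat_adjoint (G * A) = G * A)"

definition E_proj :: "complex mat \<Rightarrow> complex mat" where
  "E_proj A = 1\<^sub>m (dim_row A) - A * mp_pinv A"

definition F_proj :: "complex mat \<Rightarrow> complex mat" where
  "F_proj A = 1\<^sub>m (dim_col A) - mp_pinv A * A"

definition unitary_mat :: "complex mat \<Rightarrow> bool" where
  "unitary_mat U \<longleftrightarrow> (\<exists>k. U \<in> carrier_mat k k \<and>
     U * mat_adjoint U = 1\<^sub>m k \<and> mat_adjoint U * U = 1\<^sub>m k)"

end

theory Submission
  imports Defs
begin


abbreviation adj :: "complex mat \<Rightarrow> complex mat" where "adj A \<equiv> mat_adjoint A"

lemma adj_dims[simp]: "dim_row (adj A) = dim_col A" "dim_col (adj A) = dim_row A"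
  unfolding mat_adjoint_def by auto

lemma adj_index[simp]: "i < dim_col A \<Longrightarrow> j < dim_row A \<Longrightarrow> adj A $$ (i,j) = cnj (A $$ (j,i))"
  unfolding mat_adjoint_def by (auto simp: mat_of_rows_def)

lemma adj_carrier[simp]: "A \<in> carrier_mat m n \<Longrightarrow> adj A \<in> carrier_mat n m"
  unfolding carrier_mat_def by auto

lemma adj_adj[simp]: "adj (adj A) = A"
  by (rule eq_matI, auto)

lemma adj_mult: assumes "A \<in> carrier_mat m k" "B \<in> carrier_mat k n"
  shows "adj (A * B) = adj B * adj A"
proof (rule eq_matI)
  fix i j assume ij: "i < dim_row (adj B * adj A)" "j < dim_col (adj B * adj A)"
  then show "adj (A * B) $$ (i, j) = (adj B * adj A) $$ (i, j)"
    using assms by (auto simp: scalar_prod_def cnj_sum mult.commute intro!: sum.cong)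
qed (use assms in auto)

lemma adj_mult_d: "dim_col A = dim_row B \<Longrightarrow> adj (A * B) = adj B * adj A"
  by (rule adj_mult[OF carrier_mat_triv carrier_matI[OF _ refl]], simp)

lemma adj_add: assumes "A \<in> carrier_mat m n" "B \<in> carrier_mat m n"
  shows "adj (A + B) = adj A + adj B"
  by (rule eq_matI, use assms in auto)

lemma adj_minus: assumes "A \<in> carrier_mat m n" "B \<in> carrier_mat m n"
  shows "adj (A - B) = adj A - adj B"
  by (rule eq_matI, use assms in auto)

lemma adj_one[simp]: "adj (1\<^sub>m n) = 1\<^sub>m n"
  by (rule eq_matI, auto)

lemma adj_zero[simp]: "adj (0\<^sub>m m n) = 0\<^sub>m n m"
  by (rule eq_matI, auto)

lemma adj_four_block: assumes "A \<in> carrier_mat m1 n1" "B \<in> carrier_mat m1 n2"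
  "C \<in> carrier_mat m2 n1" "D \<in> carrier_mat m2 n2"
  shows "adj (four_block_mat A B C D) = four_block_mat (adj A) (adj C) (adj B) (adj D)"
  by (rule eq_matI, use assms in auto)

lemma massoc: "dim_col A = dim_row B \<Longrightarrow> dim_col B = dim_row C \<Longrightarrow> A * B * C = A * (B * C)"
  by (rule assoc_mult_mat[of _ "dim_row A" "dim_col A" _ "dim_col B" _ "dim_col C"], auto)

lemma one_mult_d[simp]: "dim_row (A::complex mat) = n \<Longrightarrow> 1\<^sub>m n * A = A"
  by (metis carrier_mat_triv left_mult_one_mat)
lemma mult_one_d[simp]: "dim_col (A::complex mat) = n \<Longrightarrow> A * 1\<^sub>m n = A"
  by (metis carrier_mat_triv right_mult_one_mat)
lemma zero_mult_d[simp]: "dim_row A = n \<Longrightarrow> 0\<^sub>m k n * A = 0\<^sub>m k (dim_col A)"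
  by (metis carrier_mat_triv left_mult_zero_mat)
lemma mult_zero_d[simp]: "dim_col A = n \<Longrightarrow> A * 0\<^sub>m n k = 0\<^sub>m (dim_row A) k"
  by (metis carrier_mat_triv right_mult_zero_mat)

lemma minv_eq: assumes A: "A \<in> carrier_mat n n" and B: "B \<in> carrier_mat n n"
  and AB: "A * B = 1\<^sub>m n" and BA: "B * A = 1\<^sub>m n"
  shows "minv A = B"
  unfolding minv_def
proof (rule the_equality)
  show "B \<in> carrier_mat (dim_row A) (dim_row A) \<and> A * B = 1\<^sub>m (dim_row A) \<and> B * A = 1\<^sub>m (dim_row A)"
    using A B AB BA by auto
  fix B' assume "B' \<in> carrier_mat (dim_row A) (dim_row A) \<and> A * B' = 1\<^sub>m (dim_row A) \<and> B' * A = 1\<^sub>m (dim_row A)"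
  hence B': "B' \<in> carrier_mat n n" "B' * A = 1\<^sub>m n" using A by auto
  have "B' = B' * (A * B)" using AB B' by simp
  also have "\<dots> = (B' * A) * B" using A B B'(1) by (simp only: massoc carrier_matD)
  also have "\<dots> = B" using B' B by simp
  finally show "B' = B" .
qed

definition penrose :: "complex mat \<Rightarrow> complex mat \<Rightarrow> bool" where
  "penrose A G \<longleftrightarrow> A * G * A = A \<and> G * A * G = G \<and> adj (A * G) = A * G \<and> adj (G * A) = G * A"

lemma mp_pinv_eq: assumes A: "A \<in> carrier_mat m n" and G: "G \<in> carrier_mat n m"
  and P: "penrose A G"
  shows "mp_pinv A = G"
  unfolding mp_pinv_def
proof (rule the_equality)
  show "G \<in> carrier_mat (dim_col A) (dim_row A) \<and> A * G * A = A \<and> G * A * G = G \<and>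
      adj (A * G) = A * G \<and> adj (G * A) = G * A" using A G P unfolding penrose_def by auto
  fix H assume "H \<in> carrier_mat (dim_col A) (dim_row A) \<and> A * H * A = A \<and> H * A * H = H \<and>
      adj (A * H) = A * H \<and> adj (H * A) = H * A"
  hence H: "H \<in> carrier_mat n m" and h1: "A * H * A = A" and h2: "H * A * H = H"
    and h3: "adj (A * H) = A * H" and h4: "adj (H * A) = H * A" using A by auto
  from P have g1: "A * G * A = A" and g2: "G * A * G = G"
    and g3: "adj (A * G) = A * G" and g4: "adj (G * A) = G * A" unfolding penrose_def by auto
  have adjA1: "adj A = adj A * (A * G)"
  proof -
    have "adj A = adj (A * G * A)" using g1 by simp
    also have "\<dots> = adj A * adj (A * G)" by (rule adj_mult[of _ m m _ n], use A G in auto)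
    finally show ?thesis using g3 by simp
  qed
  have adjA2: "adj A = (G * A) * adj A"
  proof -
    have "adj A = adj (A * (G * A))" using g1 A G by (simp add: assoc_mult_mat)
    also have "\<dots> = adj (G * A) * adj A" using A G by (simp add: adj_mult[of _ m n _ n])
    finally show ?thesis using g4 by simp
  qed
  have "H = H * (A * H)" using h2 A H by (simp add: assoc_mult_mat)
  also have "\<dots> = H * adj (A * H)" using h3 by simp
  also have "\<dots> = H * (adj H * adj A)" using A H by (simp add: adj_mult)
  also have "\<dots> = H * (adj H * (adj A * (A * G)))" using adjA1 by simp
  also have "\<dots> = H * (adj (A * H) * (A * G))" using A H G
    by (simp add: adj_mult assoc_mult_mat[of _ m n _ m _ m])
  also have "\<dots> = H * ((A * H) * (A * G))" using h3 by simp
  also have "\<dots> = (H * A * H) * A * G" using A H G by (simp add: massoc)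
  also have "\<dots> = H * A * G" using h2 by simp
  finally have e1: "H = H * A * G" .
  have adjA3: "adj A = (H * A) * adj A"
  proof -
    have "adj A = adj (A * (H * A))" using h1 A H by (simp add: assoc_mult_mat)
    also have "\<dots> = adj (H * A) * adj A" using A H by (simp add: adj_mult[of _ m n _ n])
    finally show ?thesis using h4 by simp
  qed
  have "G = (G * A) * G" using g2 by simp
  also have "\<dots> = adj (G * A) * G" using g4 by simp
  also have "\<dots> = adj A * adj G * G" using A G by (simp add: adj_mult)
  also have "\<dots> = (H * A) * adj A * adj G * G" using adjA3 by simp
  also have "\<dots> = H * A * (adj (G * A) * G)" using A G H by (simp add: adj_mult massoc carrier_matD)
  also have "\<dots> = H * A * (G * A * G)" using g4 by simp
  also have "\<dots> = H * A * G" using g2 by simp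
  finally have e2: "G = H * A * G" .
  show "H = G" using e1 e2 by simp
qed

lemma inv_rassoc: fixes P Q X :: "complex mat" assumes "P * Q = 1\<^sub>m r" "P \<in> carrier_mat r k" "Q \<in> carrier_mat k r" "X \<in> carrier_mat r l"
  shows "P * (Q * X) = X"
proof -
  have "P * (Q * X) = (P * Q) * X" using assms(2-4) by (simp add: massoc carrier_matD)
  thus ?thesis using assms by (simp add: carrier_matD)
qed

lemma herm_inv: assumes A: "A \<in> carrier_mat r r" and S: "S \<in> carrier_mat r r"
  and h: "adj A = A" and AS: "A * S = 1\<^sub>m r" and SA: "S * A = 1\<^sub>m r"
  shows "adj S = S"
proof -
  have "adj (A * S) = adj S * A" using A S h by (simp add: adj_mult)
  hence e: "adj S * A = 1\<^sub>m r" using AS by simp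
  have "adj S = adj S * (A * S)" using AS S by simp
  also have "\<dots> = (adj S * A) * S" using A S by (simp add: massoc carrier_matD)
  also have "\<dots> = S" using e S by simp
  finally show ?thesis .
qed



lemma penrose_factor:
  assumes B: "B \<in> carrier_mat m r" and W: "W \<in> carrier_mat r r" and C: "C \<in> carrier_mat r n"
  and Wi: "Wi \<in> carrier_mat r r" "W * Wi = 1\<^sub>m r" "Wi * W = 1\<^sub>m r"
  and S: "S \<in> carrier_mat r r" "(C * adj C) * S = 1\<^sub>m r" "S * (C * adj C) = 1\<^sub>m r"
  and T: "T \<in> carrier_mat r r" "(adj B * B) * T = 1\<^sub>m r" "T * (adj B * B) = 1\<^sub>m r"
  shows "penrose (B * W * C) (adj C * S * Wi * T * adj B)"
proof -
  have hC: "adj (C * adj C) = C * adj C" using C by (simp add: adj_mult[of C r n "adj C" r])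
  have hB: "adj (adj B * B) = adj B * B" using B by (simp add: adj_mult[of "adj B" r m B r])
  have BB: "adj B * B \<in> carrier_mat r r" and CC: "C * adj C \<in> carrier_mat r r" using B C by auto
  have Sh: "adj S = S" by (rule herm_inv[OF _ S(1) hC S(2,3)], use C in auto)
  have Th: "adj T = T" by (rule herm_inv[OF _ T(1) hB T(2,3)], use B in auto)
  have s1: "\<And>(X::complex mat). dim_row X = r \<Longrightarrow> C * (adj C * (S * X)) = X"
  proof -
    fix X :: "complex mat" assume d: "dim_row X = r"
    have X: "X \<in> carrier_mat r (dim_col X)" by (rule carrier_matI[OF d refl])
    have "C * (adj C * (S * X)) = (C * adj C) * (S * X)" using C S(1) d by (simp add: massoc carrier_matD)
    also have "\<dots> = X" by (rule inv_rassoc[OF S(2) CC S(1) X])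
    finally show "C * (adj C * (S * X)) = X" .
  qed
  have s2: "\<And>(X::complex mat). dim_row X = r \<Longrightarrow> S * (C * (adj C * X)) = X"
  proof -
    fix X :: "complex mat" assume d: "dim_row X = r"
    have X: "X \<in> carrier_mat r (dim_col X)" by (rule carrier_matI[OF d refl])
    have "S * (C * (adj C * X)) = S * ((C * adj C) * X)" using C S(1) d by (simp add: massoc carrier_matD)
    also have "\<dots> = X" by (rule inv_rassoc[OF S(3) S(1) CC X])
    finally show "S * (C * (adj C * X)) = X" .
  qed
  have t1: "\<And>(X::complex mat). dim_row X = r \<Longrightarrow> adj B * (B * (T * X)) = X"
  proof -
    fix X :: "complex mat" assume d: "dim_row X = r"
    have X: "X \<in> carrier_mat r (dim_col X)" by (rule carrier_matI[OF d refl])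
    have "adj B * (B * (T * X)) = (adj B * B) * (T * X)" using B T(1) d by (simp add: massoc carrier_matD)
    also have "\<dots> = X" by (rule inv_rassoc[OF T(2) BB T(1) X])
    finally show "adj B * (B * (T * X)) = X" .
  qed
  have t2: "\<And>(X::complex mat). dim_row X = r \<Longrightarrow> T * (adj B * (B * X)) = X"
  proof -
    fix X :: "complex mat" assume d: "dim_row X = r"
    have X: "X \<in> carrier_mat r (dim_col X)" by (rule carrier_matI[OF d refl])
    have "T * (adj B * (B * X)) = T * ((adj B * B) * X)" using B T(1) d by (simp add: massoc carrier_matD)
    also have "\<dots> = X" by (rule inv_rassoc[OF T(3) T(1) BB X])
    finally show "T * (adj B * (B * X)) = X" .
  qed
  have w1: "\<And>(X::complex mat). dim_row X = r \<Longrightarrow> W * (Wi * X) = X"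
    by (rule inv_rassoc[OF Wi(2) W Wi(1) carrier_matI[OF _ refl]])
  have w2: "\<And>(X::complex mat). dim_row X = r \<Longrightarrow> Wi * (W * X) = X"
    by (rule inv_rassoc[OF Wi(3) Wi(1) W carrier_matI[OF _ refl]])
  note cs = B W C Wi(1) S(1) T(1)
  have MG: "B * W * C * (adj C * S * Wi * T * adj B) = B * (T * adj B)"
    using cs by (simp add: massoc carrier_matD s1 w1)
  have GM: "adj C * S * Wi * T * adj B * (B * W * C) = adj C * (S * C)"
    using cs by (simp add: massoc carrier_matD t2 w2)
  show ?thesis unfolding penrose_def
  proof (intro conjI)
    show "B * W * C * (adj C * S * Wi * T * adj B) * (B * W * C) = B * W * C"
      unfolding MG using cs by (simp add: massoc carrier_matD t2)
    show "adj C * S * Wi * T * adj B * (B * W * C) * (adj C * S * Wi * T * adj B) = adj C * S * Wi * T * adj B"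
      unfolding GM using cs by (simp add: massoc carrier_matD s2)
    show "adj (B * W * C * (adj C * S * Wi * T * adj B)) = B * W * C * (adj C * S * Wi * T * adj B)"
      unfolding MG using cs Th by (simp add: adj_mult[of _ m r _ m] adj_mult[of _ r r _ m] carrier_matD massoc)
    show "adj (adj C * S * Wi * T * adj B * (B * W * C)) = adj C * S * Wi * T * adj B * (B * W * C)"
      unfolding GM using cs Sh by (simp add: adj_mult[of _ n r _ n] adj_mult[of _ r r _ n] carrier_matD massoc)
  qed
qed

lemma rassoc_eq: fixes P Q R X :: "complex mat"
  assumes "P * Q = R" "dim_col P = dim_row Q" "dim_col Q = dim_row X"
  shows "P * (Q * X) = R * X"
  using assms massoc by metis

lemma unitaryD: assumes "unitary_mat U" "U \<in> carrier_mat m m"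
  shows "U * adj U = 1\<^sub>m m" "adj U * U = 1\<^sub>m m"
  using assms unfolding unitary_mat_def carrier_mat_def by auto

lemma penrose_unitary:
  assumes U: "U \<in> carrier_mat m m" "U * adj U = 1\<^sub>m m" "adj U * U = 1\<^sub>m m"
  and V: "V \<in> carrier_mat n n" "V * adj V = 1\<^sub>m n" "adj V * V = 1\<^sub>m n"
  and A: "A \<in> carrier_mat m n" and G: "G \<in> carrier_mat n m" and P: "penrose A G"
  shows "penrose (U * A * adj V) (V * G * adj U)"
proof -
  from P have g1: "A * G * A = A" and g2: "G * A * G = G"
    and g3: "adj (A * G) = A * G" and g4: "adj (G * A) = G * A" unfolding penrose_def by auto
  have u: "\<And>X :: complex mat. dim_row X = m \<Longrightarrow> adj U * (U * X) = X"
    by (rule inv_rassoc[OF U(3) _ U(1) carrier_matI[OF _ refl]], use U in auto)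
  have v: "\<And>X :: complex mat. dim_row X = n \<Longrightarrow> adj V * (V * X) = X"
    by (rule inv_rassoc[OF V(3) _ V(1) carrier_matI[OF _ refl]], use V in auto)
  have AG: "U * A * adj V * (V * G * adj U) = U * (A * G) * adj U"
    using U(1) V(1) A G by (simp add: massoc carrier_matD v)
  have GA: "V * G * adj U * (U * A * adj V) = V * (G * A) * adj V"
    using U(1) V(1) A G by (simp add: massoc carrier_matD u)
  have g1': "\<And>X. dim_row X = n \<Longrightarrow> A * (G * (A * X)) = A * X"
    using rassoc_eq[OF g1] A G by (simp add: massoc carrier_matD)
  have g2': "\<And>X. dim_row X = m \<Longrightarrow> G * (A * (G * X)) = G * X"
    using rassoc_eq[OF g2] A G by (simp add: massoc carrier_matD)
  show ?thesis unfolding penrose_def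
  proof (intro conjI)
    show "U * A * adj V * (V * G * adj U) * (U * A * adj V) = U * A * adj V"
      unfolding AG using U(1) V(1) A G g1' by (simp add: massoc carrier_matD u)
    show "V * G * adj U * (U * A * adj V) * (V * G * adj U) = V * G * adj U"
      unfolding GA using U(1) V(1) A G g2' by (simp add: massoc carrier_matD v)
    have "adj (U * (A * G) * adj U) = U * adj (A * G) * adj U"
      using U(1) A G by (simp add: adj_mult_d massoc carrier_matD)
    thus "adj (U * A * adj V * (V * G * adj U)) = U * A * adj V * (V * G * adj U)"
      unfolding AG g3 .
    have "adj (V * (G * A) * adj V) = V * adj (G * A) * adj V"
      using V(1) A G by (simp add: adj_mult_d massoc carrier_matD)
    thus "adj (V * G * adj U * (U * A * adj V)) = V * G * adj U * (U * A * adj V)"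
      unfolding GA g4 .
  qed
qed

lemma inv_exists: assumes A: "(A::complex mat) \<in> carrier_mat n n" and d: "det A \<noteq> 0"
  shows "\<exists>B. B \<in> carrier_mat n n \<and> A * B = 1\<^sub>m n \<and> B * A = 1\<^sub>m n"
  using det_non_zero_imp_unit[OF A d, of "()"] unfolding Units_def ring_mat_def by auto

lemma invertible_det: assumes A: "A \<in> carrier_mat n n" and i: "invertible_mat (A :: complex mat)"
  shows "det A \<noteq> 0"
proof -
  from i obtain B where AB: "A * B = 1\<^sub>m n" and BA: "B * A = 1\<^sub>m (dim_row B)"
    using A unfolding invertible_mat_def inverts_mat_def by auto
  have "dim_col (A * B) = n" using AB by simp
  hence c: "dim_col B = n" by simp
  have "dim_col (B * A) = dim_row B" using BA by simp
  hence "dim_row B = n" using A by simp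
  hence B: "B \<in> carrier_mat n n" using c by (intro carrier_matI)
  have "det A * det B = 1" using det_mult[OF A B] AB by simp
  thus ?thesis by auto
qed

lemma sprod_adj: assumes v: "v \<in> carrier_vec q" and K: "K \<in> carrier_mat p q" and w: "w \<in> carrier_vec p"
  shows "v \<bullet>c (adj K *\<^sub>v w) = (K *\<^sub>v v) \<bullet>c w"
proof -
  have "v \<bullet>c (adj K *\<^sub>v w) = (\<Sum>i<q. v $ i * (\<Sum>j<p. K $$ (j,i) * cnj (w $ j)))"
    using v K w by (simp add: scalar_prod_def mult_mat_vec_def cnj_sum lessThan_atLeast0 mult.commute)
  also have "\<dots> = (\<Sum>j<p. (\<Sum>i<q. K $$ (j,i) * v $ i) * cnj (w $ j))"
    by (simp add: sum_distrib_left sum_distrib_right mult_ac sum.swap[of _ "{..<q}"])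
  also have "\<dots> = (K *\<^sub>v v) \<bullet>c w"
    using v K w by (simp add: scalar_prod_def mult_mat_vec_def lessThan_atLeast0)
  finally show ?thesis .
qed

lemma inv_one_plus: assumes K: "K \<in> carrier_mat p q"
  shows "det (1\<^sub>m q + adj K * K) \<noteq> 0"
proof
  assume "det (1\<^sub>m q + adj K * K) = 0"
  moreover have KK: "1\<^sub>m q + adj K * K \<in> carrier_mat q q"
    using K by (metis add_carrier_mat adj_carrier mult_carrier_mat one_carrier_mat)
  ultimately obtain v where v: "v \<in> carrier_vec q" "v \<noteq> 0\<^sub>v q" and e: "(1\<^sub>m q + adj K * K) *\<^sub>v v = 0\<^sub>v q"
    using det_0_iff_vec_prod_zero[of "1\<^sub>m q + adj K * K" q] by auto
  have "(1\<^sub>m q + adj K * K) *\<^sub>v v = 1\<^sub>m q *\<^sub>v v + (adj K * K) *\<^sub>v v"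
    by (rule add_mult_distrib_mat_vec[of _ q q], use K v in auto)
  also have "\<dots> = v + adj K *\<^sub>v (K *\<^sub>v v)"
    using K v by (simp add: assoc_mult_mat_vec[of _ q p])
  finally have "(1\<^sub>m q + adj K * K) *\<^sub>v v = v + adj K *\<^sub>v (K *\<^sub>v v)" .
  hence e2: "v + adj K *\<^sub>v (K *\<^sub>v v) = 0\<^sub>v q" using e by simp
  have "v \<bullet>c (v + adj K *\<^sub>v (K *\<^sub>v v)) = v \<bullet>c v + v \<bullet>c (adj K *\<^sub>v (K *\<^sub>v v))"
  proof -
    have u: "adj K *\<^sub>v (K *\<^sub>v v) \<in> carrier_vec q" using K by (intro carrier_vecI) simp
    have "v \<bullet>c (v + adj K *\<^sub>v (K *\<^sub>v v)) = v \<bullet> (conjugate v + conjugate (adj K *\<^sub>v (K *\<^sub>v v)))"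
      using conjugate_add_vec[OF v(1) u] by simp
    also have "\<dots> = v \<bullet>c v + v \<bullet>c (adj K *\<^sub>v (K *\<^sub>v v))"
      by (rule scalar_prod_add_distrib[of _ q], use v u in auto)
    finally show ?thesis .
  qed
  also have "\<dots> = v \<bullet>c v + (K *\<^sub>v v) \<bullet>c (K *\<^sub>v v)"
    using sprod_adj[OF v(1) K, of "K *\<^sub>v v"] K v by simp
  finally have "v \<bullet>c v + (K *\<^sub>v v) \<bullet>c (K *\<^sub>v v) = 0" using e2 v by simp
  moreover have "v \<bullet>c v \<ge> 0" "(K *\<^sub>v v) \<bullet>c (K *\<^sub>v v) \<ge> 0" by auto
  ultimately have "v \<bullet>c v = 0" by (metis add_nonneg_eq_0_iff)
  thus False using v by simp
qed

lemma rank_le_nr: assumes A: "(A :: complex mat) \<in> carrier_mat m n"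
  shows "vec_space.rank m A \<le> m"
proof -
  interpret vec_space "TYPE(complex)" m .
  obtain S where S: "maximal S (\<lambda>T. T \<subseteq> set (cols A) \<and> lin_indpt T)"
    using maximal_exists[of "(\<lambda>T. T \<subseteq> set (cols A) \<and> lin_indpt T)" "card (set (cols A))" "{}"]
    by (meson List.finite_set card_mono empty_iff empty_subsetI finite_lin_indpt2 rev_finite_subset)
  have r: "rank A = card S" by (rule rank_card_indpt[OF A S])
  have sub: "S \<subseteq> set (cols A)" and li: "lin_indpt S" using S by (metis maximal_def)+
  have "set (cols A) \<subseteq> carrier_vec m" using A cols_dim by blast
  hence "S \<subseteq> carrier V" using sub by auto
  hence "card S \<le> dim" using li_le_dim(2)[OF fin_dim _ li] by auto
  thus ?thesis using r dim_is_n by simp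
qed

lemma mult_fb[simp]:
  fixes A1 B1 C1 D1 A2 B2 C2 D2 :: "complex mat"
  assumes "dim_row B1 = dim_row A1" "dim_col C1 = dim_col A1" "dim_row D1 = dim_row C1" "dim_col D1 = dim_col B1"
    "dim_row A2 = dim_col A1" "dim_row B2 = dim_col A1" "dim_row C2 = dim_col B1" "dim_row D2 = dim_col B1"
    "dim_col C2 = dim_col A2" "dim_col D2 = dim_col B2"
  shows "four_block_mat A1 B1 C1 D1 * four_block_mat A2 B2 C2 D2
    = four_block_mat (A1 * A2 + B1 * C2) (A1 * B2 + B1 * D2) (C1 * A2 + D1 * C2) (C1 * B2 + D1 * D2)"
  by (rule mult_four_block_mat[of _ "dim_row A1" "dim_col A1" _ "dim_col B1" _ "dim_row C1" _ _ "dim_col A2" _ "dim_col B2"],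
      auto intro!: carrier_matI simp: assms)

lemma add_fb[simp]:
  fixes A1 B1 C1 D1 A2 B2 C2 D2 :: "complex mat"
  assumes "dim_row B1 = dim_row A1" "dim_col C1 = dim_col A1" "dim_row D1 = dim_row C1" "dim_col D1 = dim_col B1"
    "dim_row A2 = dim_row A1" "dim_col A2 = dim_col A1" "dim_row B2 = dim_row B1" "dim_col B2 = dim_col B1"
    "dim_row C2 = dim_row C1" "dim_col C2 = dim_col C1" "dim_row D2 = dim_row D1" "dim_col D2 = dim_col D1"
  shows "four_block_mat A1 B1 C1 D1 + four_block_mat A2 B2 C2 D2
    = four_block_mat (A1 + A2) (B1 + B2) (C1 + C2) (D1 + D2)"
  by (rule add_four_block_mat[of _ "dim_row A1" "dim_col A1" _ "dim_col B1" _ "dim_row C1"],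
      auto intro!: carrier_matI simp: assms)

lemma minus_fb[simp]:
  fixes A1 B1 C1 D1 A2 B2 C2 D2 :: "complex mat"
  assumes "dim_row B1 = dim_row A1" "dim_col C1 = dim_col A1" "dim_row D1 = dim_row C1" "dim_col D1 = dim_col B1"
    "dim_row A2 = dim_row A1" "dim_col A2 = dim_col A1" "dim_row B2 = dim_row B1" "dim_col B2 = dim_col B1"
    "dim_row C2 = dim_row C1" "dim_col C2 = dim_col C1" "dim_row D2 = dim_row D1" "dim_col D2 = dim_col D1"
  shows "four_block_mat A1 B1 C1 D1 - four_block_mat A2 B2 C2 D2
    = four_block_mat (A1 - A2) (B1 - B2) (C1 - C2) (D1 - D2)"
  by (rule eq_matI, auto simp: assms)

lemma adj_fb[simp]:
  fixes A B C D :: "complex mat"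
  assumes "dim_row B = dim_row A" "dim_col C = dim_col A" "dim_row D = dim_row C" "dim_col D = dim_col B"
  shows "adj (four_block_mat A B C D) = four_block_mat (adj A) (adj C) (adj B) (adj D)"
  by (rule adj_four_block[of _ "dim_row A" "dim_col A" _ "dim_col B" _ "dim_row C"],
      auto intro!: carrier_matI simp: assms)

lemma add_zero_d[simp]: "dim_row (A::complex mat) = a \<Longrightarrow> dim_col A = b \<Longrightarrow> A + 0\<^sub>m a b = A"
  by (rule eq_matI, auto)
lemma zero_add_d[simp]: "dim_row (A::complex mat) = a \<Longrightarrow> dim_col A = b \<Longrightarrow> 0\<^sub>m a b + A = A"
  by (rule eq_matI, auto)
lemma minus_zero_d[simp]: "dim_row (A::complex mat) = a \<Longrightarrow> dim_col A = b \<Longrightarrow> A - 0\<^sub>m a b = A"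
  by (rule eq_matI, auto)
lemma zero_minus_d[simp]: "dim_row (A::complex mat) = a \<Longrightarrow> dim_col A = b \<Longrightarrow> 0\<^sub>m a b - A = - A"
  by (rule eq_matI, auto)
lemma add_uminus_d[simp]: "(A::complex mat) + - A = 0\<^sub>m (dim_row A) (dim_col A)"
  by (rule eq_matI, auto)
lemma minus_self_d[simp]: "(A::complex mat) - A = 0\<^sub>m (dim_row A) (dim_col A)"
  by (rule eq_matI, auto)
lemma uminus_uminus_d[simp]: "- (- (A::complex mat)) = A"
  by (rule eq_matI, auto)
lemma uminus_zero_d[simp]: "- (0\<^sub>m a b :: complex mat) = 0\<^sub>m a b"
  by (rule eq_matI, auto)
lemma adj_uminus[simp]: "adj (- (A::complex mat)) = - adj A"
  by (rule eq_matI, auto)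




lemma conj_collapse: fixes P A U B Q :: "complex mat"
  assumes u: "adj U * U = 1\<^sub>m k" and d: "dim_row U = k" "dim_col U = k" "dim_col A = k" "dim_row B = k"
    "dim_col P = dim_row A" "dim_col B = dim_row Q"
  shows "P * A * adj U * (U * B * Q) = P * (A * B) * Q"
proof -
  have "adj U * (U * (B * Q)) = B * Q"
    by (rule inv_rassoc[OF u _ _ carrier_matI[OF _ refl]], use d in \<open>auto intro!: carrier_matI\<close>)
  thus ?thesis using d by (simp add: massoc)
qed

lemma conj_add_one: fixes U A :: "complex mat"
  assumes U: "U \<in> carrier_mat k k" "U * adj U = 1\<^sub>m k" and A: "A \<in> carrier_mat k k"
  shows "1\<^sub>m k + U * A * adj U = U * (1\<^sub>m k + A) * adj U"
proof -
  have "U * (1\<^sub>m k + A) = U * 1\<^sub>m k + U * A"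
    by (rule mult_add_distrib_mat[OF U(1) _ A], simp)
  hence "U * (1\<^sub>m k + A) * adj U = (U + U * A) * adj U" using U by simp
  also have "\<dots> = U * adj U + U * A * adj U"
    by (rule add_mult_distrib_mat[of _ k k], use U A in auto)
  finally show ?thesis using U by simp
qed

lemma conj_minus_one: fixes U A :: "complex mat"
  assumes U: "U \<in> carrier_mat k k" "U * adj U = 1\<^sub>m k" and A: "A \<in> carrier_mat k k"
  shows "U * A * adj U - 1\<^sub>m k = U * (A - 1\<^sub>m k) * adj U"
proof -
  have "U * (A - 1\<^sub>m k) = U * A - U * 1\<^sub>m k"
    by (rule mult_minus_distrib_mat[OF U(1) A], simp)
  hence "U * (A - 1\<^sub>m k) * adj U = (U * A - U) * adj U" using U by simp
  also have "\<dots> = U * A * adj U - U * adj U"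
    by (rule minus_mult_distrib_mat[of _ k k], use U A in auto)
  finally show ?thesis using U by simp
qed

lemma one_minus_conj: fixes U A :: "complex mat"
  assumes U: "U \<in> carrier_mat k k" "U * adj U = 1\<^sub>m k" and A: "A \<in> carrier_mat k k"
  shows "1\<^sub>m k - U * A * adj U = U * (1\<^sub>m k - A) * adj U"
proof -
  have "U * (1\<^sub>m k - A) = U * 1\<^sub>m k - U * A"
    by (rule mult_minus_distrib_mat[OF U(1) _ A], simp)
  hence "U * (1\<^sub>m k - A) * adj U = (U - U * A) * adj U" using U by simp
  also have "\<dots> = U * adj U - U * A * adj U"
    by (rule minus_mult_distrib_mat[of _ k k], use U A in auto)
  finally show ?thesis using U by simp
qed

lemma conj_adj: fixes P A Q :: "complex mat"
  assumes "dim_col P = dim_row A" "dim_col A = dim_row Q"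
  shows "adj (P * A * Q) = adj Q * adj A * adj P"
  using assms by (simp add: adj_mult_d massoc)

lemma uminus_add_d[simp]: "- (A::complex mat) + A = 0\<^sub>m (dim_row A) (dim_col A)"
  by (rule eq_matI, auto)

lemma fb_triv[simp]: fixes A :: "complex mat"
  shows "dim_row A = p \<Longrightarrow> dim_col A = q \<Longrightarrow> four_block_mat A (0\<^sub>m p 0) (0\<^sub>m 0 q) (0\<^sub>m 0 0) = A"
  by (rule eq_matI, auto)

theorem theorem3p3:
  fixes m n r :: nat
    and N U V \<Sigma> X Y X1 X2 X4 Y1 Y3 Y4 :: "complex mat"
  assumes N: "N \<in> carrier_mat m n"
    and rank: "vec_space.rank m N = r"
    and Sigma: "\<Sigma> \<in> carrier_mat r r" "diagonal_mat \<Sigma>"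
      "\<forall>i<r. \<exists>s::real. s > 0 \<and> \<Sigma> $$ (i, i) = complex_of_real s"
    and U: "U \<in> carrier_mat m m" "unitary_mat U"
    and V: "V \<in> carrier_mat n n" "unitary_mat V"
    and svd: "N = U * four_block_mat \<Sigma> (0\<^sub>m r (n - r)) (0\<^sub>m (m - r) r) (0\<^sub>m (m - r) (n - r))
                 * mat_adjoint V"
    and X: "X \<in> carrier_mat m m" "invertible_mat X"
    and Y: "Y \<in> carrier_mat n n" "invertible_mat Y"
    and X1: "X1 \<in> carrier_mat r r" and X2: "X2 \<in> carrier_mat (m - r) r"
    and X4: "X4 \<in> carrier_mat (m - r) (m - r)"
    and Xblock: "X = U * four_block_mat X1 (0\<^sub>m r (m - r)) X2 X4 * mat_adjoint U"
    and Y1: "Y1 \<in> carrier_mat r r" and Y3: "Y3 \<in> carrier_mat r (n - r)"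
    and Y4: "Y4 \<in> carrier_mat (n - r) (n - r)"
    and Yblock: "Y = V * four_block_mat Y1 Y3 (0\<^sub>m (n - r) r) Y4 * mat_adjoint V"
  shows "let M = X * N * Y;
             R = X * E_proj N * minv X * (E_proj N - 1\<^sub>m m);
             L = (F_proj N - 1\<^sub>m n) * minv Y * F_proj N * Y
         in mp_pinv M =
            (1\<^sub>m n + mat_adjoint L) * minv (1\<^sub>m n + L * mat_adjoint L)
            * mp_pinv N * N * (minv Y * mp_pinv N * minv X) * N * mp_pinv N
            * minv (1\<^sub>m m + mat_adjoint R * R) * (1\<^sub>m m + mat_adjoint R)"
proof -
  define b where "b = m - r"
  define c where "c = n - r"
  have rm: "r \<le> m" using rank_le_nr[OF N] rank by simp
  have rn: "r \<le> n" using vec_space.rank_le_nc[OF N] rank by simp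
  have mb: "m = r + b" and nc: "n = r + c" using rm rn unfolding b_def c_def by auto
  have Uu: "U * adj U = 1\<^sub>m m" "adj U * U = 1\<^sub>m m" using unitaryD[OF U(2,1)] by auto
  have Vu: "V * adj V = 1\<^sub>m n" "adj V * V = 1\<^sub>m n" using unitaryD[OF V(2,1)] by auto
  note dimsU = carrier_matD[OF U(1)] carrier_matD[OF V(1)] carrier_matD[OF N] carrier_matD[OF X(1)] carrier_matD[OF Y(1)]
  have X1': "X1 \<in> carrier_mat r r" and X2': "X2 \<in> carrier_mat b r" and X4': "X4 \<in> carrier_mat b b"
    using X1 X2 X4 unfolding b_def by auto
  have Y1': "Y1 \<in> carrier_mat r r" and Y3': "Y3 \<in> carrier_mat r c" and Y4': "Y4 \<in> carrier_mat c c"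
    using Y1 Y3 Y4 unfolding c_def by auto
  note dimsB = carrier_matD[OF Sigma(1)] carrier_matD[OF X1'] carrier_matD[OF X2'] carrier_matD[OF X4']
    carrier_matD[OF Y1'] carrier_matD[OF Y3'] carrier_matD[OF Y4']
  have dS: "det \<Sigma> \<noteq> 0"
  proof -
    have ut: "upper_triangular \<Sigma>" using Sigma(1,2) unfolding upper_triangular_def diagonal_mat_def by auto
    have "det \<Sigma> = prod_list (diag_mat \<Sigma>)" by (rule det_upper_triangular[OF ut Sigma(1)])
    moreover have "0 \<notin> set (diag_mat \<Sigma>)"
    proof
      assume "0 \<in> set (diag_mat \<Sigma>)"
      then obtain i where i: "i < r" "\<Sigma> $$ (i,i) = 0" using Sigma(1) unfolding diag_mat_def by auto
      from Sigma(3) i(1) obtain s :: real where "s > 0" "\<Sigma> $$ (i,i) = complex_of_real s" by auto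
      thus False using i(2) by simp
    qed
    ultimately show ?thesis by (simp add: prod_list_zero_iff)
  qed
  define X' where "X' = four_block_mat X1 (0\<^sub>m r b) X2 X4"
  define Y' where "Y' = four_block_mat Y1 Y3 (0\<^sub>m c r) Y4"
  have XX': "X = U * X' * adj U" using Xblock unfolding X'_def b_def .
  have YY': "Y = V * Y' * adj V" using Yblock unfolding Y'_def c_def .
  have uU: "\<And>Z :: complex mat. dim_row Z = m \<Longrightarrow> adj U * (U * Z) = Z"
    by (rule inv_rassoc[OF Uu(2) _ U(1) carrier_matI[OF _ refl]], use U(1) in auto)
  have Uu': "\<And>Z :: complex mat. dim_row Z = m \<Longrightarrow> U * (adj U * Z) = Z"
    by (rule inv_rassoc[OF Uu(1) U(1) _ carrier_matI[OF _ refl]], use U(1) in auto)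
  have vV: "\<And>Z :: complex mat. dim_row Z = n \<Longrightarrow> adj V * (V * Z) = Z"
    by (rule inv_rassoc[OF Vu(2) _ V(1) carrier_matI[OF _ refl]], use V(1) in auto)
  have Vv': "\<And>Z :: complex mat. dim_row Z = n \<Longrightarrow> V * (adj V * Z) = Z"
    by (rule inv_rassoc[OF Vu(1) V(1) _ carrier_matI[OF _ refl]], use V(1) in auto)
  have X'c: "X' \<in> carrier_mat m m" unfolding X'_def mb using X1' X4' by auto
  have Y'c: "Y' \<in> carrier_mat n n" unfolding Y'_def nc using Y1' Y4' by auto
  have dU: "det (adj U) * det U = 1"
    using det_mult[of "adj U" m U] Uu(2) U(1) by simp
  have dV: "det (adj V) * det V = 1"
    using det_mult[of "adj V" n V] Vu(2) V(1) by simp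
  have dX': "det X' \<noteq> 0"
  proof -
    have "adj U * X * U = X'" using XX' X'c U(1) by (simp add: carrier_matD uU Uu massoc)
    hence "det X' = det (adj U) * det X * det U"
      using det_mult[of "adj U * X" m U] det_mult[of "adj U" m X] U(1) X(1)
      by (metis adj_carrier mult_carrier_mat)
    hence "det X' = det X * (det (adj U) * det U)" by (simp add: ac_simps)
    thus ?thesis using dU invertible_det[OF X] by simp
  qed
  have dY': "det Y' \<noteq> 0"
  proof -
    have "adj V * Y * V = Y'" using YY' Y'c V(1) by (simp add: carrier_matD vV Vu massoc)
    hence "det Y' = det (adj V) * det Y * det V"
      using det_mult[of "adj V * Y" n V] det_mult[of "adj V" n Y] V(1) Y(1)
      by (metis adj_carrier mult_carrier_mat)
    hence "det Y' = det Y * (det (adj V) * det V)" by (simp add: ac_simps)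
    thus ?thesis using dV invertible_det[OF Y] by simp
  qed
  have dX1: "det X1 \<noteq> 0" and dX4: "det X4 \<noteq> 0"
    using dX' det_four_block_mat_upper_right_zero[OF X1' refl X2' X4'] unfolding X'_def by auto
  have dY1: "det Y1 \<noteq> 0" and dY4: "det Y4 \<noteq> 0"
    using dY' det_four_block_mat_lower_left_zero[OF Y1' Y3' refl Y4'] unfolding Y'_def by auto
  obtain Si where Si: "Si \<in> carrier_mat r r" "\<Sigma> * Si = 1\<^sub>m r" "Si * \<Sigma> = 1\<^sub>m r"
    using inv_exists[OF Sigma(1) dS] by auto
  obtain X1i where X1i: "X1i \<in> carrier_mat r r" "X1 * X1i = 1\<^sub>m r" "X1i * X1 = 1\<^sub>m r"
    using inv_exists[OF X1' dX1] by auto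
  obtain X4i where X4i: "X4i \<in> carrier_mat b b" "X4 * X4i = 1\<^sub>m b" "X4i * X4 = 1\<^sub>m b"
    using inv_exists[OF X4' dX4] by auto
  obtain Y1i where Y1i: "Y1i \<in> carrier_mat r r" "Y1 * Y1i = 1\<^sub>m r" "Y1i * Y1 = 1\<^sub>m r"
    using inv_exists[OF Y1' dY1] by auto
  obtain Y4i where Y4i: "Y4i \<in> carrier_mat c c" "Y4 * Y4i = 1\<^sub>m c" "Y4i * Y4 = 1\<^sub>m c"
    using inv_exists[OF Y4' dY4] by auto
  define K where "K = X2 * X1i"
  define J where "J = Y1i * Y3"
  have K: "K \<in> carrier_mat b r" and J: "J \<in> carrier_mat r c" unfolding K_def J_def
    using X2' X1i Y1i Y3' by auto
  obtain Tk where Tk: "Tk \<in> carrier_mat r r" "(1\<^sub>m r + adj K * K) * Tk = 1\<^sub>m r" "Tk * (1\<^sub>m r + adj K * K) = 1\<^sub>m r"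
    using inv_exists[OF _ inv_one_plus[OF K]] K by (metis add_carrier_mat adj_carrier mult_carrier_mat one_carrier_mat)
  obtain Sj where Sj: "Sj \<in> carrier_mat r r" "(1\<^sub>m r + J * adj J) * Sj = 1\<^sub>m r" "Sj * (1\<^sub>m r + J * adj J) = 1\<^sub>m r"
    using inv_exists[OF _ inv_one_plus[of "adj J" c r]] J by (metis adj_adj add_carrier_mat adj_carrier mult_carrier_mat one_carrier_mat)
  note dimsI = carrier_matD[OF Si(1)] carrier_matD[OF X1i(1)] carrier_matD[OF X4i(1)] carrier_matD[OF Y1i(1)]
    carrier_matD[OF Y4i(1)] carrier_matD[OF K] carrier_matD[OF J] carrier_matD[OF Tk(1)] carrier_matD[OF Sj(1)]
  have x1a: "\<And>Z :: complex mat. dim_row Z = r \<Longrightarrow> X1 * (X1i * Z) = Z"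
    by (rule inv_rassoc[OF X1i(2) X1' X1i(1) carrier_matI[OF _ refl]])
  have x1b: "\<And>Z :: complex mat. dim_row Z = r \<Longrightarrow> X1i * (X1 * Z) = Z"
    by (rule inv_rassoc[OF X1i(3) X1i(1) X1' carrier_matI[OF _ refl]])
  have x4a: "\<And>Z :: complex mat. dim_row Z = b \<Longrightarrow> X4 * (X4i * Z) = Z"
    by (rule inv_rassoc[OF X4i(2) X4' X4i(1) carrier_matI[OF _ refl]])
  have x4b: "\<And>Z :: complex mat. dim_row Z = b \<Longrightarrow> X4i * (X4 * Z) = Z"
    by (rule inv_rassoc[OF X4i(3) X4i(1) X4' carrier_matI[OF _ refl]])
  have y1a: "\<And>Z :: complex mat. dim_row Z = r \<Longrightarrow> Y1 * (Y1i * Z) = Z"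
    by (rule inv_rassoc[OF Y1i(2) Y1' Y1i(1) carrier_matI[OF _ refl]])
  have y1b: "\<And>Z :: complex mat. dim_row Z = r \<Longrightarrow> Y1i * (Y1 * Z) = Z"
    by (rule inv_rassoc[OF Y1i(3) Y1i(1) Y1' carrier_matI[OF _ refl]])
  have y4a: "\<And>Z :: complex mat. dim_row Z = c \<Longrightarrow> Y4 * (Y4i * Z) = Z"
    by (rule inv_rassoc[OF Y4i(2) Y4' Y4i(1) carrier_matI[OF _ refl]])
  have y4b: "\<And>Z :: complex mat. dim_row Z = c \<Longrightarrow> Y4i * (Y4 * Z) = Z"
    by (rule inv_rassoc[OF Y4i(3) Y4i(1) Y4' carrier_matI[OF _ refl]])
  have sa: "\<And>Z :: complex mat. dim_row Z = r \<Longrightarrow> \<Sigma> * (Si * Z) = Z"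
    by (rule inv_rassoc[OF Si(2) Sigma(1) Si(1) carrier_matI[OF _ refl]])
  have sb: "\<And>Z :: complex mat. dim_row Z = r \<Longrightarrow> Si * (\<Sigma> * Z) = Z"
    by (rule inv_rassoc[OF Si(3) Si(1) Sigma(1) carrier_matI[OF _ refl]])
  note invs = x1a x1b x4a x4b y1a y1b y4a y4b sa sb X1i(2,3) X4i(2,3) Y1i(2,3) Y4i(2,3) Si(2,3)
  note dims = dimsU dimsB dimsI
  define D where "D = four_block_mat \<Sigma> (0\<^sub>m r c) (0\<^sub>m b r) (0\<^sub>m b c)"
  define Dp where "Dp = four_block_mat Si (0\<^sub>m r b) (0\<^sub>m c r) (0\<^sub>m c b)"
  define P' :: "complex mat" where "P' = four_block_mat (1\<^sub>m r) (0\<^sub>m r b) (0\<^sub>m b r) (0\<^sub>m b b)"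
  define Q' :: "complex mat" where "Q' = four_block_mat (1\<^sub>m r) (0\<^sub>m r c) (0\<^sub>m c r) (0\<^sub>m c c)"
  define E' :: "complex mat" where "E' = four_block_mat (0\<^sub>m r r) (0\<^sub>m r b) (0\<^sub>m b r) (1\<^sub>m b)"
  define F' :: "complex mat" where "F' = four_block_mat (0\<^sub>m r r) (0\<^sub>m r c) (0\<^sub>m c r) (1\<^sub>m c)"
  define Em :: "complex mat" where "Em = four_block_mat (- 1\<^sub>m r) (0\<^sub>m r b) (0\<^sub>m b r) (0\<^sub>m b b)"
  define Fm :: "complex mat" where "Fm = four_block_mat (- 1\<^sub>m r) (0\<^sub>m r c) (0\<^sub>m c r) (0\<^sub>m c c)"
  define Xi' where "Xi' = four_block_mat X1i (0\<^sub>m r b) (- (X4i * (X2 * X1i))) X4i"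
  define Yi' where "Yi' = four_block_mat Y1i (- (Y1i * (Y3 * Y4i))) (0\<^sub>m c r) Y4i"
  define R' where "R' = four_block_mat (0\<^sub>m r r) (0\<^sub>m r b) K (0\<^sub>m b b)"
  define L' where "L' = four_block_mat (0\<^sub>m r r) J (0\<^sub>m c r) (0\<^sub>m c c)"
  have pen_D: "penrose D Dp" unfolding penrose_def D_def Dp_def using dims invs by (simp add: massoc)
  have DDp: "D * Dp = P'" unfolding D_def Dp_def P'_def using dims invs by (simp add: massoc)
  have DpD: "Dp * D = Q'" unfolding D_def Dp_def Q'_def using dims invs by (simp add: massoc)
  have XXi: "X' * Xi' = 1\<^sub>m m" unfolding X'_def Xi'_def mb using dims invs by (simp add: massoc)
  have XiX: "Xi' * X' = 1\<^sub>m m" unfolding X'_def Xi'_def mb using dims invs by (simp add: massoc)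
  have YYi: "Y' * Yi' = 1\<^sub>m n" unfolding Y'_def Yi'_def nc using dims invs by (simp add: massoc)
  have YiY: "Yi' * Y' = 1\<^sub>m n" unfolding Y'_def Yi'_def nc using dims invs by (simp add: massoc)
  have EP: "1\<^sub>m m - P' = E'" unfolding P'_def E'_def mb four_block_one_mat[symmetric] using dims by (simp del: four_block_one_mat)
  have FQ: "1\<^sub>m n - Q' = F'" unfolding Q'_def F'_def nc four_block_one_mat[symmetric] using dims by (simp del: four_block_one_mat)
  have EmE: "E' - 1\<^sub>m m = Em" unfolding Em_def E'_def mb four_block_one_mat[symmetric] using dims by (simp del: four_block_one_mat)
  have FmF: "F' - 1\<^sub>m n = Fm" unfolding Fm_def F'_def nc four_block_one_mat[symmetric] using dims by (simp del: four_block_one_mat)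
  have RR: "X' * E' * Xi' * Em = R'" unfolding X'_def E'_def Xi'_def Em_def R'_def K_def using dims invs by (simp add: massoc)
  have LL: "Fm * Yi' * F' * Y' = L'" unfolding Y'_def F'_def Yi'_def Fm_def L'_def J_def using dims invs by (simp add: massoc)
  have Dc: "D \<in> carrier_mat m n" unfolding D_def mb nc using Sigma(1) by auto
  have Dpc: "Dp \<in> carrier_mat n m" unfolding Dp_def mb nc using Si(1) by auto
  have P'c: "P' \<in> carrier_mat m m" unfolding P'_def mb by auto
  have Q'c: "Q' \<in> carrier_mat n n" unfolding Q'_def nc by auto
  have E'c: "E' \<in> carrier_mat m m" unfolding E'_def mb by auto
  have F'c: "F' \<in> carrier_mat n n" unfolding F'_def nc by auto
  have Emc: "Em \<in> carrier_mat m m" unfolding Em_def mb by auto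
  have Fmc: "Fm \<in> carrier_mat n n" unfolding Fm_def nc by auto
  have Xi'c: "Xi' \<in> carrier_mat m m" unfolding Xi'_def mb using X1i(1) X4i(1) by auto
  have Yi'c: "Yi' \<in> carrier_mat n n" unfolding Yi'_def nc using Y1i(1) Y4i(1) by auto
  have R'c: "R' \<in> carrier_mat m m" unfolding R'_def mb by auto
  have L'c: "L' \<in> carrier_mat n n" unfolding L'_def nc by auto
  note dimsC = carrier_matD[OF Dc] carrier_matD[OF Dpc] carrier_matD[OF P'c] carrier_matD[OF Q'c]
    carrier_matD[OF E'c] carrier_matD[OF F'c] carrier_matD[OF Emc] carrier_matD[OF Fmc]
    carrier_matD[OF Xi'c] carrier_matD[OF Yi'c] carrier_matD[OF R'c] carrier_matD[OF L'c]
    carrier_matD[OF X'c] carrier_matD[OF Y'c]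
  note cU = conj_collapse[OF Uu(2)] and cV = conj_collapse[OF Vu(2)]
  have NN: "N = U * D * adj V" unfolding svd D_def b_def c_def ..
  have Npinv: "mp_pinv N = V * Dp * adj U"
    by (rule mp_pinv_eq[OF N _ penrose_unitary[OF U(1) Uu V(1) Vu Dc Dpc pen_D, folded NN]], use V(1) U(1) Dpc in auto)
  have NNp: "N * mp_pinv N = U * P' * adj U"
    unfolding Npinv unfolding NN DDp[symmetric]
    by (rule cV, use carrier_matD[OF V(1)] carrier_matD[OF U(1)] carrier_matD[OF Dc] carrier_matD[OF Dpc] in simp_all)
  have NpN: "mp_pinv N * N = V * Q' * adj V"
    unfolding Npinv unfolding NN DpD[symmetric]
    by (rule cU, use carrier_matD[OF V(1)] carrier_matD[OF U(1)] carrier_matD[OF Dc] carrier_matD[OF Dpc] in simp_all)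
  have EN: "E_proj N = U * E' * adj U"
    unfolding E_proj_def NNp EP[symmetric] dimsU by (rule one_minus_conj[OF U(1) Uu(1) P'c])
  have FN: "F_proj N = V * F' * adj V"
    unfolding F_proj_def NpN FQ[symmetric] dimsU by (rule one_minus_conj[OF V(1) Vu(1) Q'c])
  have Xinv: "minv X = U * Xi' * adj U"
  proof (rule minv_eq[OF X(1)])
    show "U * Xi' * adj U \<in> carrier_mat m m" using U(1) Xi'c by auto
    have "X * (U * Xi' * adj U) = U * (X' * Xi') * adj U" unfolding XX' by (rule cU, use carrier_matD[OF U(1)] carrier_matD[OF X'c] carrier_matD[OF Xi'c] in simp_all)
    thus "X * (U * Xi' * adj U) = 1\<^sub>m m" unfolding XXi using Uu U(1) by simp
    have "U * Xi' * adj U * X = U * (Xi' * X') * adj U" unfolding XX' by (rule cU, use carrier_matD[OF U(1)] carrier_matD[OF X'c] carrier_matD[OF Xi'c] in simp_all)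
    thus "U * Xi' * adj U * X = 1\<^sub>m m" unfolding XiX using Uu U(1) by simp
  qed
  have Yinv: "minv Y = V * Yi' * adj V"
  proof (rule minv_eq[OF Y(1)])
    show "V * Yi' * adj V \<in> carrier_mat n n" using V(1) Yi'c by auto
    have "Y * (V * Yi' * adj V) = V * (Y' * Yi') * adj V" unfolding YY' by (rule cV, use carrier_matD[OF V(1)] carrier_matD[OF Y'c] carrier_matD[OF Yi'c] in simp_all)
    thus "Y * (V * Yi' * adj V) = 1\<^sub>m n" unfolding YYi using Vu V(1) by simp
    have "V * Yi' * adj V * Y = V * (Yi' * Y') * adj V" unfolding YY' by (rule cV, use carrier_matD[OF V(1)] carrier_matD[OF Y'c] carrier_matD[OF Yi'c] in simp_all)
    thus "V * Yi' * adj V * Y = 1\<^sub>m n" unfolding YiY using Vu V(1) by simp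
  qed
  have ENm: "E_proj N - 1\<^sub>m m = U * Em * adj U"
    unfolding EN EmE[symmetric] by (rule conj_minus_one[OF U(1) Uu(1) E'c])
  have FNm: "F_proj N - 1\<^sub>m n = V * Fm * adj V"
    unfolding FN FmF[symmetric] by (rule conj_minus_one[OF V(1) Vu(1) F'c])
  have Rc: "X * E_proj N * minv X * (E_proj N - 1\<^sub>m m) = U * R' * adj U"
    unfolding ENm unfolding Xinv unfolding EN XX' RR[symmetric]
    by (simp only: cU carrier_matD[OF U(1)] carrier_matD[OF X'c] carrier_matD[OF Xi'c] carrier_matD[OF E'c] carrier_matD[OF Emc] index_mult_mat(2,3) adj_dims)
  have Lc: "(F_proj N - 1\<^sub>m n) * minv Y * F_proj N * Y = V * L' * adj V"
    unfolding FNm unfolding Yinv unfolding FN YY' LL[symmetric]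
    by (simp only: cV carrier_matD[OF V(1)] carrier_matD[OF Y'c] carrier_matD[OF Yi'c] carrier_matD[OF F'c] carrier_matD[OF Fmc] index_mult_mat(2,3) adj_dims)
  define TTi where "TTi = four_block_mat Tk (0\<^sub>m r b) (0\<^sub>m b r) (1\<^sub>m b)"
  define RA where "RA = four_block_mat (1\<^sub>m r) (adj K) (0\<^sub>m b r) (1\<^sub>m b)"
  define SSi where "SSi = four_block_mat Sj (0\<^sub>m r c) (0\<^sub>m c r) (1\<^sub>m c)"
  define LA where "LA = four_block_mat (1\<^sub>m r) (0\<^sub>m r c) (adj J) (1\<^sub>m c)"
  have TTic: "TTi \<in> carrier_mat m m" unfolding TTi_def mb using Tk(1) by auto
  have RAc: "RA \<in> carrier_mat m m" unfolding RA_def mb using K by auto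
  have SSic: "SSi \<in> carrier_mat n n" unfolding SSi_def nc using Sj(1) by auto
  have LAc: "LA \<in> carrier_mat n n" unfolding LA_def nc using J by auto
  have RRc: "adj R' * R' \<in> carrier_mat m m" using R'c by auto
  have LLc: "L' * adj L' \<in> carrier_mat n n" using L'c by auto
  have TT1: "(1\<^sub>m m + adj R' * R') * TTi = 1\<^sub>m m"
    unfolding TTi_def R'_def mb four_block_one_mat[symmetric] using dims Tk(2) by (simp del: four_block_one_mat)
  have TT2: "TTi * (1\<^sub>m m + adj R' * R') = 1\<^sub>m m"
    unfolding TTi_def R'_def mb four_block_one_mat[symmetric] using dims Tk(3) by (simp del: four_block_one_mat)
  have SS1: "(1\<^sub>m n + L' * adj L') * SSi = 1\<^sub>m n"
    unfolding SSi_def L'_def nc four_block_one_mat[symmetric] using dims Sj(2) by (simp del: four_block_one_mat)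
  have SS2: "SSi * (1\<^sub>m n + L' * adj L') = 1\<^sub>m n"
    unfolding SSi_def L'_def nc four_block_one_mat[symmetric] using dims Sj(3) by (simp del: four_block_one_mat)
  have RA1: "1\<^sub>m m + adj R' = RA"
    unfolding RA_def R'_def mb four_block_one_mat[symmetric] using dims by (simp del: four_block_one_mat)
  have LA1: "1\<^sub>m n + adj L' = LA"
    unfolding LA_def L'_def nc four_block_one_mat[symmetric] using dims by (simp del: four_block_one_mat)
  have adjR: "adj (U * R' * adj U) = U * adj R' * adj U"
    using conj_adj[of U R' "adj U"] carrier_matD[OF U(1)] carrier_matD[OF R'c] by simp
  have adjL: "adj (V * L' * adj V) = V * adj L' * adj V"
    using conj_adj[of V L' "adj V"] carrier_matD[OF V(1)] carrier_matD[OF L'c] by simp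
  have RtR: "1\<^sub>m m + adj (U * R' * adj U) * (U * R' * adj U) = U * (1\<^sub>m m + adj R' * R') * adj U"
  proof -
    have "adj (U * R' * adj U) * (U * R' * adj U) = U * (adj R' * R') * adj U"
      unfolding adjR by (rule cU, use carrier_matD[OF U(1)] carrier_matD[OF R'c] in simp_all)
    thus ?thesis using conj_add_one[OF U(1) Uu(1) RRc] by simp
  qed
  have LLt: "1\<^sub>m n + (V * L' * adj V) * adj (V * L' * adj V) = V * (1\<^sub>m n + L' * adj L') * adj V"
  proof -
    have "(V * L' * adj V) * adj (V * L' * adj V) = V * (L' * adj L') * adj V"
      unfolding adjL by (rule cV, use carrier_matD[OF V(1)] carrier_matD[OF L'c] in simp_all)
    thus ?thesis using conj_add_one[OF V(1) Vu(1) LLc] by simp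
  qed
  have RRc1: "1\<^sub>m m + adj R' * R' \<in> carrier_mat m m" using RRc by auto
  have LLc1: "1\<^sub>m n + L' * adj L' \<in> carrier_mat n n" using LLc by auto
  have Rinv: "minv (1\<^sub>m m + adj (U * R' * adj U) * (U * R' * adj U)) = U * TTi * adj U"
    unfolding RtR
  proof (rule minv_eq)
    show "U * (1\<^sub>m m + adj R' * R') * adj U \<in> carrier_mat m m" using U(1) RRc1 by auto
    show "U * TTi * adj U \<in> carrier_mat m m" using U(1) TTic by auto
    have "U * (1\<^sub>m m + adj R' * R') * adj U * (U * TTi * adj U) = U * ((1\<^sub>m m + adj R' * R') * TTi) * adj U"
      by (rule cU, use carrier_matD[OF U(1)] carrier_matD[OF RRc1] carrier_matD[OF TTic] in simp_all)
    thus "U * (1\<^sub>m m + adj R' * R') * adj U * (U * TTi * adj U) = 1\<^sub>m m" unfolding TT1 using Uu U(1) by simp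
    have "U * TTi * adj U * (U * (1\<^sub>m m + adj R' * R') * adj U) = U * (TTi * (1\<^sub>m m + adj R' * R')) * adj U"
      by (rule cU, use carrier_matD[OF U(1)] carrier_matD[OF RRc1] carrier_matD[OF TTic] in simp_all)
    thus "U * TTi * adj U * (U * (1\<^sub>m m + adj R' * R') * adj U) = 1\<^sub>m m" unfolding TT2 using Uu U(1) by simp
  qed
  have Linv: "minv (1\<^sub>m n + (V * L' * adj V) * adj (V * L' * adj V)) = V * SSi * adj V"
    unfolding LLt
  proof (rule minv_eq)
    show "V * (1\<^sub>m n + L' * adj L') * adj V \<in> carrier_mat n n" using V(1) LLc1 by auto
    show "V * SSi * adj V \<in> carrier_mat n n" using V(1) SSic by auto
    have "V * (1\<^sub>m n + L' * adj L') * adj V * (V * SSi * adj V) = V * ((1\<^sub>m n + L' * adj L') * SSi) * adj V"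
      by (rule cV, use carrier_matD[OF V(1)] carrier_matD[OF LLc1] carrier_matD[OF SSic] in simp_all)
    thus "V * (1\<^sub>m n + L' * adj L') * adj V * (V * SSi * adj V) = 1\<^sub>m n" unfolding SS1 using Vu V(1) by simp
    have "V * SSi * adj V * (V * (1\<^sub>m n + L' * adj L') * adj V) = V * (SSi * (1\<^sub>m n + L' * adj L')) * adj V"
      by (rule cV, use carrier_matD[OF V(1)] carrier_matD[OF LLc1] carrier_matD[OF SSic] in simp_all)
    thus "V * SSi * adj V * (V * (1\<^sub>m n + L' * adj L') * adj V) = 1\<^sub>m n" unfolding SS2 using Vu V(1) by simp
  qed
  have RAf: "1\<^sub>m m + adj (U * R' * adj U) = U * RA * adj U"
    unfolding adjR RA1[symmetric] by (rule conj_add_one[OF U(1) Uu(1)], use R'c in auto)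
  have LAf: "1\<^sub>m n + adj (V * L' * adj V) = V * LA * adj V"
    unfolding adjL LA1[symmetric] by (rule conj_add_one[OF V(1) Vu(1)], use L'c in auto)
  have Mf: "X * N * Y = U * (X' * D * Y') * adj V"
    unfolding XX' YY' NN by (simp only: cU cV carrier_matD[OF U(1)] carrier_matD[OF V(1)] carrier_matD[OF X'c] carrier_matD[OF Y'c] carrier_matD[OF Dc] index_mult_mat(2,3) adj_dims)
  have Midf: "minv Y * mp_pinv N * minv X = V * (Yi' * Dp * Xi') * adj U"
    unfolding Yinv Npinv Xinv by (simp only: cU cV carrier_matD[OF U(1)] carrier_matD[OF V(1)] carrier_matD[OF Xi'c] carrier_matD[OF Yi'c] carrier_matD[OF Dpc] index_mult_mat(2,3) adj_dims)
  define G' where "G' = LA * SSi * Dp * D * (Yi' * Dp * Xi') * D * Dp * TTi * RA"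
  have G'c: "G' \<in> carrier_mat n m" unfolding G'_def using LAc SSic Dpc Dc Yi'c Xi'c TTic RAc
    by (meson mult_carrier_mat)
  define M' where "M' = X' * D * Y'"
  have M'c: "M' \<in> carrier_mat m n" unfolding M'_def using X'c Dc Y'c by (meson mult_carrier_mat)
  have RHS: "(1\<^sub>m n + adj (V * L' * adj V)) * minv (1\<^sub>m n + (V * L' * adj V) * adj (V * L' * adj V))
            * mp_pinv N * N * (minv Y * mp_pinv N * minv X) * N * mp_pinv N
            * minv (1\<^sub>m m + adj (U * R' * adj U) * (U * R' * adj U)) * (1\<^sub>m m + adj (U * R' * adj U))
            = V * G' * adj U"
    unfolding LAf Linv Midf Rinv RAf unfolding Npinv unfolding NN G'_def
    by (simp only: cU cV carrier_matD[OF U(1)] carrier_matD[OF V(1)] carrier_matD[OF Xi'c] carrier_matD[OF Yi'c] carrier_matD[OF Dpc] carrier_matD[OF Dc] carrier_matD[OF LAc] carrier_matD[OF SSic] carrier_matD[OF TTic] carrier_matD[OF RAc] index_mult_mat(2,3) adj_dims)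
  have pen_M': "penrose M' G'"
  proof -
    define Bm where "Bm = four_block_mat (1\<^sub>m r) (0\<^sub>m r 0) K (0\<^sub>m b 0)"
    define Cm where "Cm = four_block_mat (1\<^sub>m r) J (0\<^sub>m 0 r) (0\<^sub>m 0 c)"
    define W where "W = X1 * \<Sigma> * Y1"
    define Wi where "Wi = Y1i * Si * X1i"
    have Bmc: "Bm \<in> carrier_mat m r" unfolding Bm_def mb using K by auto
    have Cmc: "Cm \<in> carrier_mat r n" unfolding Cm_def nc using J by auto
    have Wc: "W \<in> carrier_mat r r" unfolding W_def using X1' Sigma(1) Y1' by auto
    have Wic: "Wi \<in> carrier_mat r r" unfolding Wi_def using Y1i(1) Si(1) X1i(1) by auto
    have WWi: "W * Wi = 1\<^sub>m r" unfolding W_def Wi_def using dims invs by (simp add: massoc)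
    have WiW: "Wi * W = 1\<^sub>m r" unfolding W_def Wi_def using dims invs by (simp add: massoc)
    have CC: "Cm * adj Cm = 1\<^sub>m r + J * adj J" unfolding Cm_def using dims by (simp add: massoc)
    have BB: "adj Bm * Bm = 1\<^sub>m r + adj K * K" unfolding Bm_def using dims by (simp add: massoc)
    have MBWC: "M' = Bm * four_block_mat W (0\<^sub>m r 0) (0\<^sub>m 0 r) (0\<^sub>m 0 0) * Cm"
      unfolding M'_def X'_def D_def Y'_def Bm_def Cm_def W_def K_def J_def using dims invs
      by (simp add: massoc del: fb_triv)
    have GBWC: "G' = adj Cm * four_block_mat Sj (0\<^sub>m r 0) (0\<^sub>m 0 r) (0\<^sub>m 0 0)
        * four_block_mat Wi (0\<^sub>m r 0) (0\<^sub>m 0 r) (0\<^sub>m 0 0) * four_block_mat Tk (0\<^sub>m r 0) (0\<^sub>m 0 r) (0\<^sub>m 0 0) * adj Bm"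
      unfolding G'_def LA_def SSi_def Dp_def D_def Yi'_def Xi'_def TTi_def RA_def Bm_def Cm_def Wi_def using dims invs
      by (simp add: massoc del: fb_triv)
    have e1: "M' = Bm * W * Cm" unfolding MBWC using Wc by simp
    have e2: "G' = adj Cm * Sj * Wi * Tk * adj Bm" unfolding GBWC using Wic Sj(1) Tk(1) by simp
    show ?thesis unfolding e1 e2
      by (rule penrose_factor[OF Bmc Wc Cmc Wic WWi WiW Sj(1) _ _ Tk(1)], use CC BB Sj(2,3) Tk(2,3) in simp_all)
  qed
  have Mpinv: "mp_pinv (U * M' * adj V) = V * G' * adj U"
    by (rule mp_pinv_eq[OF _ _ penrose_unitary[OF U(1) Uu V(1) Vu M'c G'c pen_M']], use U(1) V(1) M'c G'c in auto)
  show ?thesis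
    unfolding Let_def Rc Lc Mf RHS M'_def[symmetric] Mpinv ..
qed


end
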